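(* Let $s\ge 1$, $q=4^{2s}$, and let $\theta$ be the automorphism of $F_q$ given by $\theta(a)=a^{4^s}$. Let $n$ be an even positive integer and let $g(x)\in F_q[x;\theta]$ be a right divisor of $x^n-1$ in $F_q[x;\theta]$ whose degree $m$ is even. Then the skew cyclic code $C=\langle g(x)\rangle$ of length $n$ over $F_q$ is a reversible DNA code if and only if $g(x)$ is a palindromic polynomial.
   Context: $F_q[x;\theta]$ is the skew polynomial ring: polynomials $\sum a_ix^i$ with $a_i\in F_q$, usual addition, and multiplication determined by $xa=\theta(a)x$ for $a\in F_q$. A skew cyclic code of length $n$ is a linear code $C\subseteq F_q^n$ such that $(\theta(c_{n-1}),\theta(c_0),\ldots,\theta(c_{n-2}))\in C$ whenever $(c_0,\ldots,c_{n-1})\in C$; identifying $(c_0,\ldots,c_{n-1})$ with $c_0+c_1x+\dots+c_{n-1}x^{n-1}$, such codes are the left $F_q[x;\theta]$-submodules of $F_q[x;\theta]/(x^n-1)$, and $\langle g(x)\rangle$ denotes the left submodule generated by $g(x)$ (the generator need not be monic). A polynomial $f(x)=a_0+a_1x+\dots+a_tx^t$ of degree $t$ is palindromic if $a_i=a_{t-i}$ for all $i$, and $\theta$-palindromic if $a_i=\theta(a_{t-i})$ for all $i$. DNA correspondence: there is a fixed bijection $\tau:F_{4^{2s}}\to\{A,T,G,C\}^{2s}$ such that for every $\beta$, $\tau(\beta^{4^s})$ is the reverse of the string $\tau(\beta)$; it extends to $\phi:F_q^n\to\{A,T,G,C\}^{2sn}$ by concatenation, $\phi(c_0,\ldots,c_{n-1})=(\tau(c_0),\ldots,\tau(c_{n-1}))$.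 A code $C\subseteq F_q^n$ is a reversible DNA code if the reverse string $\phi(c)^r$ lies in $\phi(C)$ for all $c\in C$; equivalently, $(\theta(c_{n-1}),\ldots,\theta(c_1),\theta(c_0))\in C$ for every $(c_0,\ldots,c_{n-1})\in C$. *)

theory Defs
  imports "HOL-Computational_Algebra.Polynomial"
begin

text \<open>Skew polynomials over a ring are represented by ordinary polynomials
  (their coefficient sequences); addition is the usual one, and the product is the
  skew product determined by x a = theta(a) x, i.e.
  (a x^i)(b x^j) = a theta^i(b) x^(i+j).\<close>

definition skew_mult :: "('a::comm_ring_1 \<Rightarrow> 'a) \<Rightarrow> 'a poly \<Rightarrow> 'a poly \<Rightarrow> 'a poly" where
  "skew_mult \<theta> p r =
     (\<Sum>i\<le>degree p. \<Sum>j\<le>degree r. monom (coeff p i * (\<theta> ^^ i) (coeff r j)) (i + j))"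

definition xn_minus_1 :: "nat \<Rightarrow> 'a::comm_ring_1 poly" where
  "xn_minus_1 n = monom 1 n - 1"

definition skew_right_dvd :: "('a::comm_ring_1 \<Rightarrow> 'a) \<Rightarrow> 'a poly \<Rightarrow> 'a poly \<Rightarrow> bool" where
  "skew_right_dvd \<theta> g f \<longleftrightarrow> (\<exists>h. f = skew_mult \<theta> h g)"

definition vec_of :: "nat \<Rightarrow> 'a::zero poly \<Rightarrow> 'a list" where
  "vec_of n c = map (coeff c) [0..<n]"

text \<open>The skew cyclic code <g> of length n: the left submodule of
  F[x;theta]/(x^n - 1) generated by g, i.e. the classes of the left multiples f g,
  each represented by its unique representative of degree < n, viewed as vectors
  in F^n.\<close>
definition skew_cyclic_code :: "('a::comm_ring_1 \<Rightarrow> 'a) \<Rightarrow> nat \<Rightarrow> 'a poly \<Rightarrow> 'a list set" where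
  "skew_cyclic_code \<theta> n g =
     vec_of n ` {c. degree c < n \<and>
        (\<exists>f k. c = skew_mult \<theta> f g + skew_mult \<theta> k (xn_minus_1 n))}"

definition palindromic :: "'a::zero poly \<Rightarrow> bool" where
  "palindromic f \<longleftrightarrow> (\<forall>i\<le>degree f. coeff f i = coeff f (degree f - i))"

datatype nucleotide = A | T | G | C

definition dna_map :: "('a \<Rightarrow> nucleotide list) \<Rightarrow> 'a list \<Rightarrow> nucleotide list" where
  "dna_map \<tau> c = concat (map \<tau> c)"

definition reversible_dna_code :: "('a \<Rightarrow> nucleotide list) \<Rightarrow> 'a list set \<Rightarrow> bool" where
  "reversible_dna_code \<tau> Cd \<longleftrightarrow> (\<forall>c\<in>Cd. rev (dna_map \<tau> c) \<in> dna_map \<tau> ` Cd)"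

end

theory Submission
  imports Defs
begin


definition epart :: "'a::comm_monoid_add poly \<Rightarrow> 'a poly" where
  "epart p = (\<Sum>i\<le>degree p. if even i then monom (coeff p i) i else 0)"
definition opart :: "'a::comm_monoid_add poly \<Rightarrow> 'a poly" where
  "opart p = (\<Sum>i\<le>degree p. if odd i then monom (coeff p i) i else 0)"

lemma coeff_epart: "coeff (epart p) k = (if even k then coeff p k else 0)"
proof -
  have "coeff (epart p) k = (\<Sum>i\<le>degree p. if i = k then (if even i then coeff p i else 0) else 0)"
    unfolding epart_def coeff_sum by (intro sum.cong) (auto simp: coeff_monom)
  also have "\<dots> = (if even k \<and> k \<le> degree p then coeff p k else 0)"
    by simp
  finally show ?thesis by (auto simp: coeff_eq_0)
qed

lemma coeff_opart: "coeff (opart p) k = (if odd k then coeff p k else 0)"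
proof -
  have "coeff (opart p) k = (\<Sum>i\<le>degree p. if i = k then (if odd i then coeff p i else 0) else 0)"
    unfolding opart_def coeff_sum by (intro sum.cong) (auto simp: coeff_monom)
  also have "\<dots> = (if odd k \<and> k \<le> degree p then coeff p k else 0)"
    by simp
  finally show ?thesis by (auto simp: coeff_eq_0)
qed

definition rv :: "nat \<Rightarrow> 'a::comm_monoid_add poly \<Rightarrow> 'a poly" where
  "rv N p = (\<Sum>j\<le>N. monom (coeff p j) (N - j))"

lemma coeff_rv: "coeff (rv N p) i = (if i \<le> N then coeff p (N - i) else 0)"
proof -
  have "coeff (rv N p) i = (\<Sum>j\<le>N. if j = N - i \<and> i \<le> N then coeff p j else 0)"
    unfolding rv_def coeff_sum by (intro sum.cong) (auto simp: coeff_monom)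
  also have "\<dots> = (if i \<le> N then coeff p (N - i) else 0)"
    by (cases "i \<le> N") auto
  finally show ?thesis .
qed


lemma epart_add: "epart (p + q) = epart p + epart q"
  by (rule poly_eqI) (simp add: coeff_epart)
lemma opart_add: "opart (p + q) = opart p + opart q"
  by (rule poly_eqI) (simp add: coeff_opart)
lemma eo_split: "epart p + opart p = p"
  by (rule poly_eqI) (simp add: coeff_epart coeff_opart)
lemma epart_0[simp]: "epart 0 = 0" by (rule poly_eqI) (simp add: coeff_epart)
lemma opart_0[simp]: "opart 0 = 0" by (rule poly_eqI) (simp add: coeff_opart)

definition evenp :: "'a::comm_monoid_add poly \<Rightarrow> bool" where
  "evenp q \<longleftrightarrow> (\<forall>i. odd i \<longrightarrow> coeff q i = 0)"
definition oddp :: "'a::comm_monoid_add poly \<Rightarrow> bool" where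
  "oddp q \<longleftrightarrow> (\<forall>i. even i \<longrightarrow> coeff q i = 0)"

lemma evenp_epart: "evenp (epart p)" by (simp add: evenp_def coeff_epart)
lemma oddp_opart: "oddp (opart p)" by (simp add: oddp_def coeff_opart)

lemma par_diff: "i \<le> (k::nat) \<Longrightarrow> even (k - i) \<longleftrightarrow> (even k \<longleftrightarrow> even i)"
  by (metis dvd_diff_nat even_add le_add_diff_inverse)

lemma epart_mult_even:
  fixes q p :: "'a::comm_semiring_1 poly"
  assumes "evenp q" shows "epart (q * p) = q * epart p"
proof (rule poly_eqI)
  fix k
  show "coeff (epart (q * p)) k = coeff (q * epart p) k"
    unfolding coeff_epart coeff_mult
  proof (cases "even k")
    case True
    then show "(if even k then \<Sum>i\<le>k. coeff q i * coeff p (k - i) else 0) =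
      (\<Sum>i\<le>k. coeff q i * (if even (k - i) then coeff p (k - i) else 0))"
      using assms par_diff by (auto simp: evenp_def intro!: sum.cong)
  next
    case False
    then show "(if even k then \<Sum>i\<le>k. coeff q i * coeff p (k - i) else 0) =
      (\<Sum>i\<le>k. coeff q i * (if even (k - i) then coeff p (k - i) else 0))"
      using assms par_diff by (auto simp: evenp_def intro!: sum.neutral)
  qed
qed

lemma opart_mult_even:
  fixes q p :: "'a::comm_semiring_1 poly"
  assumes "evenp q" shows "opart (q * p) = q * opart p"
proof (rule poly_eqI)
  fix k
  show "coeff (opart (q * p)) k = coeff (q * opart p) k"
    unfolding coeff_opart coeff_mult
  proof (cases "even k")
    case True
    then show "(if odd k then \<Sum>i\<le>k. coeff q i * coeff p (k - i) else 0) =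
      (\<Sum>i\<le>k. coeff q i * (if odd (k - i) then coeff p (k - i) else 0))"
      using assms par_diff by (auto simp: evenp_def intro!: sum.neutral)
  next
    case False
    then show "(if odd k then \<Sum>i\<le>k. coeff q i * coeff p (k - i) else 0) =
      (\<Sum>i\<le>k. coeff q i * (if odd (k - i) then coeff p (k - i) else 0))"
      using assms par_diff by (auto simp: evenp_def intro!: sum.cong)
  qed
qed

lemma epart_mult_odd:
  fixes q p :: "'a::comm_semiring_1 poly"
  assumes "oddp q" shows "epart (q * p) = q * opart p"
proof (rule poly_eqI)
  fix k
  show "coeff (epart (q * p)) k = coeff (q * opart p) k"
    unfolding coeff_epart coeff_opart coeff_mult
  proof (cases "even k")
    case True
    then show "(if even k then \<Sum>i\<le>k. coeff q i * coeff p (k - i) else 0) =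
      (\<Sum>i\<le>k. coeff q i * (if odd (k - i) then coeff p (k - i) else 0))"
      using assms par_diff by (auto simp: oddp_def intro!: sum.cong)
  next
    case False
    then show "(if even k then \<Sum>i\<le>k. coeff q i * coeff p (k - i) else 0) =
      (\<Sum>i\<le>k. coeff q i * (if odd (k - i) then coeff p (k - i) else 0))"
    proof -
      have "coeff q i * (if odd (k - i) then coeff p (k - i) else 0) = 0" if "i \<le> k" for i
      proof (cases "even i")
        case True then show ?thesis using assms by (simp add: oddp_def)
      next
        case False then show ?thesis using par_diff[OF that] \<open>odd k\<close> by auto
      qed
      then show ?thesis using \<open>odd k\<close> by (simp add: sum.neutral)
    qed
  qed
qed

lemma opart_mult_odd:
  fixes q p :: "'a::comm_semiring_1 poly"
  assumes "oddp q" shows "opart (q * p) = q * epart p"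
proof (rule poly_eqI)
  fix k
  show "coeff (opart (q * p)) k = coeff (q * epart p) k"
    unfolding coeff_epart coeff_opart coeff_mult
  proof (cases "even k")
    case True
    then show "(if odd k then \<Sum>i\<le>k. coeff q i * coeff p (k - i) else 0) =
      (\<Sum>i\<le>k. coeff q i * (if even (k - i) then coeff p (k - i) else 0))"
    proof -
      have "coeff q i * (if even (k - i) then coeff p (k - i) else 0) = 0" if "i \<le> k" for i
      proof (cases "even i")
        case True then show ?thesis using assms by (simp add: oddp_def)
      next
        case False then show ?thesis using par_diff[OF that] \<open>even k\<close> by auto
      qed
      then show ?thesis using \<open>even k\<close> by (simp add: sum.neutral)
    qed
  next
    case False
    then show "(if odd k then \<Sum>i\<le>k. coeff q i * coeff p (k - i) else 0) =
      (\<Sum>i\<le>k. coeff q i * (if even (k - i) then coeff p (k - i) else 0))"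
      using assms par_diff by (auto simp: oddp_def intro!: sum.cong)
  qed
qed


locale invo =
  fixes th :: "'a::field \<Rightarrow> 'a"
  assumes th_add: "th (a + b) = th a + th b"
    and th_mult: "th (a * b) = th a * th b"
    and th_inv: "th (th a) = a"
begin

lemma th_0[simp]: "th 0 = 0"
  by (metis add.right_neutral add_left_cancel th_add)

lemma th_eq0[simp]: "th a = 0 \<longleftrightarrow> a = 0"
  by (metis th_0 th_inv)

lemma th_sum: "th (\<Sum>i\<in>X. f i) = (\<Sum>i\<in>X. th (f i))"
  by (induction X rule: infinite_finite_induct) (simp_all add: th_add)

lemma th_iter: "(th ^^ i) a = (if even i then a else th a)"
  by (induction i) (auto simp: th_inv)

abbreviation TH :: "'a poly \<Rightarrow> 'a poly" where "TH \<equiv> map_poly th"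

lemma coeff_TH: "coeff (TH p) k = th (coeff p k)"
  by (simp add: coeff_map_poly)

lemma TH_add: "TH (p + q) = TH p + TH q"
  by (rule poly_eqI) (simp add: coeff_TH th_add)

lemma TH_mult: "TH (p * q) = TH p * TH q"
  by (rule poly_eqI) (simp add: coeff_TH coeff_mult th_sum th_mult)

lemma TH_TH[simp]: "TH (TH p) = p"
  by (rule poly_eqI) (simp add: coeff_TH th_inv)

lemma TH_epart: "TH (epart p) = epart (TH p)"
  by (rule poly_eqI) (simp add: coeff_TH coeff_epart)
lemma TH_opart: "TH (opart p) = opart (TH p)"
  by (rule poly_eqI) (simp add: coeff_TH coeff_opart)

lemma degree_TH: "degree (TH p) = degree p"
  by (rule degree_map_poly) simp

lemma skew_S: "skew_mult th p r = epart p * r + opart p * TH r"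
proof -
  have inner: "(\<Sum>j\<le>degree r. monom ((th ^^ i) (coeff r j)) j) = (if even i then r else TH r)" for i
  proof (cases "even i")
    case True then show ?thesis by (simp add: th_iter poly_as_sum_of_monoms)
  next
    case False
    have "(\<Sum>j\<le>degree r. monom ((th ^^ i) (coeff r j)) j) = (\<Sum>j\<le>degree r. monom (coeff (TH r) j) j)"
      using False by (simp add: th_iter coeff_TH)
    also have "\<dots> = TH r" by (rule poly_as_sum_of_monoms') (simp add: degree_TH)
    finally show ?thesis using False by simp
  qed
  have "skew_mult th p r = (\<Sum>i\<le>degree p. monom (coeff p i) i * (\<Sum>j\<le>degree r. monom ((th ^^ i) (coeff r j)) j))"
    unfolding skew_mult_def by (simp add: sum_distrib_left mult_monom)
  also have "\<dots> = (\<Sum>i\<le>degree p. monom (coeff p i) i * (if even i then r else TH r))"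
    by (simp add: inner)
  also have "\<dots> = (\<Sum>i\<le>degree p. (if even i then monom (coeff p i) i else 0) * r
      + (if odd i then monom (coeff p i) i else 0) * TH r)"
    by (intro sum.cong) auto
  also have "\<dots> = epart p * r + opart p * TH r"
    by (simp add: epart_def opart_def sum.distrib sum_distrib_right)
  finally show ?thesis .
qed

lemma coeff_skew: "coeff (skew_mult th p r) k =
   (\<Sum>i\<le>k. coeff p i * (if even i then coeff r (k - i) else th (coeff r (k - i))))"
  unfolding skew_S coeff_add coeff_mult sum.distrib[symmetric]
  by (intro sum.cong) (auto simp: coeff_epart coeff_opart coeff_TH)

lemma epart_skew: "epart (skew_mult th k h) = epart k * epart h + opart k * TH (opart h)"
  by (simp add: skew_S epart_add epart_mult_even[OF evenp_epart] epart_mult_odd[OF oddp_opart] TH_opart)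

lemma opart_skew: "opart (skew_mult th k h) = epart k * opart h + opart k * TH (epart h)"
  by (simp add: skew_S opart_add opart_mult_even[OF evenp_epart] opart_mult_odd[OF oddp_opart] TH_epart)

lemma skew_assoc: "skew_mult th (skew_mult th k h) g = skew_mult th k (skew_mult th h g)"
proof -
  have "skew_mult th (skew_mult th k h) g =
     (epart k * epart h + opart k * TH (opart h)) * g + (epart k * opart h + opart k * TH (epart h)) * TH g"
    by (simp add: skew_S[of "skew_mult th k h"] epart_skew opart_skew)
  also have "\<dots> = epart k * (epart h * g + opart h * TH g) + opart k * TH (epart h * g + opart h * TH g)"
    by (simp add: TH_add TH_mult algebra_simps)
  also have "\<dots> = skew_mult th k (skew_mult th h g)"
    by (simp add: skew_S[of k] skew_S[of h])
  finally show ?thesis .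
qed

lemma skew_add_left: "skew_mult th (a + b) g = skew_mult th a g + skew_mult th b g"
  by (simp add: skew_S epart_add opart_add algebra_simps)

lemma skew_0[simp]: "skew_mult th 0 g = 0"
  by (simp add: skew_S)


lemma th_1[simp]: "th 1 = 1"
proof -
  have "th 1 = th 1 * th 1" using th_mult[of 1 1] by simp
  moreover have "th 1 \<noteq> 0" by simp
  ultimately show ?thesis by (metis mult_cancel_left2)
qed

lemma TH_smult: "TH (smult a p) = smult (th a) (TH p)"
  by (rule poly_eqI) (simp add: coeff_TH th_mult)

lemma TH_monom: "TH (monom a k) = monom (th a) k"
  by (simp add: map_poly_monom)

lemma rv_TH: "rv N (TH p) = TH (rv N p)"
  by (rule poly_eqI) (simp add: coeff_TH coeff_rv)

lemma degree_skew:
  assumes "F \<noteq> 0" "g \<noteq> 0"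
  shows "degree (skew_mult th F g) = degree F + degree g"
proof -
  let ?t = "degree F + degree g"
  let ?f = "\<lambda>k i. coeff F i * (if even i then coeff g (k - i) else th (coeff g (k - i)))"
  have up: "degree (skew_mult th F g) \<le> ?t"
  proof (rule degree_le, intro allI impI)
    fix k assume k: "?t < k"
    have "?f k i = 0" if "i \<le> k" for i
    proof (cases "i \<le> degree F")
      case True
      then have "coeff g (k - i) = 0" using k by (intro coeff_eq_0) linarith
      then show ?thesis by simp
    next
      case False then show ?thesis by (simp add: coeff_eq_0)
    qed
    then show "coeff (skew_mult th F g) k = 0" unfolding coeff_skew by (auto intro!: sum.neutral)
  qed
  have single: "?f ?t i = (if i = degree F then ?f ?t (degree F) else 0)" if "i \<le> ?t" for i
  proof (cases "i < degree F")
    case True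
    then have "coeff g (?t - i) = 0" by (intro coeff_eq_0) linarith
    then show ?thesis using True by simp
  next
    case False
    show ?thesis
    proof (cases "i = degree F")
      case True then show ?thesis by simp
    next
      case False2: False
      then have "coeff F i = 0" using False by (intro coeff_eq_0) linarith
      then show ?thesis using False2 by simp
    qed
  qed
  have "coeff (skew_mult th F g) ?t = (\<Sum>i\<le>?t. if i = degree F then ?f ?t (degree F) else 0)"
    unfolding coeff_skew by (rule sum.cong[OF refl]) (rule single, simp)
  also have "\<dots> = ?f ?t (degree F)" by simp
  also have "\<dots> \<noteq> 0" using assms by simp
  finally have "?t \<le> degree (skew_mult th F g)" by (rule le_degree)
  with up show ?thesis by simp
qed

end

lemma rv_add: "rv N (p + q) = rv N p + rv N q"
  by (rule poly_eqI) (simp add: coeff_rv)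

lemma rv_0[simp]: "rv N 0 = 0"
  by (rule poly_eqI) (simp add: coeff_rv)

lemma degree_rv: "degree (rv N p) \<le> N"
  by (rule degree_le) (simp add: coeff_rv)

lemma rv_reflect:
  fixes p :: "'a::comm_semiring_1 poly"
  assumes "degree p \<le> N"
  shows "rv N p = monom 1 (N - degree p) * reflect_poly p"
proof (rule poly_eqI)
  fix i
  show "coeff (rv N p) i = coeff (monom 1 (N - degree p) * reflect_poly p) i"
    unfolding coeff_rv coeff_monom_mult coeff_reflect_poly
  proof (cases "i \<le> N")
    case True
    show "(if i \<le> N then coeff p (N - i) else 0) =
      (if i < N - degree p then 0 else 1 * (if degree p < i - (N - degree p) then 0
        else coeff p (degree p - (i - (N - degree p)))))"
    proof (cases "i < N - degree p")
      case True
      then have "coeff p (N - i) = 0" by (intro coeff_eq_0) linarith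
      then show ?thesis using True by simp
    next
      case False
      then have "degree p - (i - (N - degree p)) = N - i" using \<open>i \<le> N\<close> assms by linarith
      moreover have "\<not> degree p < i - (N - degree p)" using \<open>i \<le> N\<close> assms by linarith
      ultimately show ?thesis using False \<open>i \<le> N\<close> by simp
    qed
  next
    case False
    then have "degree p < i - (N - degree p)" "\<not> i < N - degree p" using assms by linarith+
    then show "(if i \<le> N then coeff p (N - i) else 0) =
      (if i < N - degree p then 0 else 1 * (if degree p < i - (N - degree p) then 0
        else coeff p (degree p - (i - (N - degree p)))))" using False by simp
  qed
qed

lemma rv_mult:
  fixes p q :: "'a::idom poly"
  assumes "degree p \<le> a" "degree q \<le> b"
  shows "rv (a + b) (p * q) = rv a p * rv b q"
proof (cases "p = 0 \<or> q = 0")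
  case True then show ?thesis by auto
next
  case False
  then have d: "degree (p * q) = degree p + degree q" by (simp add: degree_mult_eq)
  have "rv (a + b) (p * q) = monom 1 (a + b - degree (p * q)) * reflect_poly (p * q)"
    using assms d by (intro rv_reflect) simp
  also have "\<dots> = (monom 1 (a - degree p) * reflect_poly p) * (monom 1 (b - degree q) * reflect_poly q)"
  proof -
    have "a + b - degree (p * q) = (a - degree p) + (b - degree q)" using assms d by linarith
    then have "monom (1::'a) (a + b - degree (p * q)) = monom 1 (a - degree p) * monom 1 (b - degree q)"
      by (simp add: mult_monom)
    then show ?thesis by (simp add: reflect_poly_mult mult_ac)
  qed
  also have "\<dots> = rv a p * rv b q" using assms by (simp add: rv_reflect)
  finally show ?thesis .
qed

lemma epart_rv: "odd N \<Longrightarrow> epart (rv N F) = rv N (opart F)"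
proof (rule poly_eqI)
  fix i assume "odd N"
  show "coeff (epart (rv N F)) i = coeff (rv N (opart F)) i"
  proof (cases "i \<le> N")
    case True
    have "odd (N - i) \<longleftrightarrow> even i" using par_diff[OF True] \<open>odd N\<close> by simp
    then show ?thesis using True by (simp add: coeff_rv coeff_epart coeff_opart)
  next
    case False
    then show ?thesis by (simp add: coeff_rv coeff_epart coeff_opart)
  qed
qed

lemma opart_rv: "odd N \<Longrightarrow> opart (rv N F) = rv N (epart F)"
proof (rule poly_eqI)
  fix i assume "odd N"
  show "coeff (opart (rv N F)) i = coeff (rv N (epart F)) i"
  proof (cases "i \<le> N")
    case True
    have "even (N - i) \<longleftrightarrow> odd i" using par_diff[OF True] \<open>odd N\<close> by simp
    then show ?thesis using True by (simp add: coeff_rv coeff_epart coeff_opart)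
  next
    case False
    then show ?thesis by (simp add: coeff_rv coeff_epart coeff_opart)
  qed
qed

lemma degree_epart: "degree (epart p) \<le> degree p"
  by (intro degree_le allI impI) (simp add: coeff_epart coeff_eq_0)
lemma degree_opart: "degree (opart p) \<le> degree p"
  by (intro degree_le allI impI) (simp add: coeff_opart coeff_eq_0)

lemma rv_pal: "palindromic g \<Longrightarrow> rv (degree g) g = g"
proof (rule poly_eqI)
  fix i assume p: "palindromic g"
  show "coeff (rv (degree g) g) i = coeff g i"
  proof (cases "i \<le> degree g")
    case True
    have e: "coeff g (degree g - i) = coeff g i" using p True unfolding palindromic_def by metis
    show ?thesis unfolding coeff_rv using True e by simp
  next
    case False
    then show ?thesis unfolding coeff_rv by (simp add: coeff_eq_0)
  qed
qed



context invo begin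

lemma skew_1: "skew_mult th 1 g = g"
proof -
  have "epart (1::'a poly) = 1" by (rule poly_eqI) (auto simp: coeff_epart odd_pos)
  moreover have "opart (1::'a poly) = 0" by (rule poly_eqI) (auto simp: coeff_opart odd_pos)
  ultimately show ?thesis by (simp add: skew_S)
qed

lemma skew_monom_odd: "odd N \<Longrightarrow> skew_mult th (monom a N) g = monom a N * TH g"
proof -
  assume N: "odd N"
  have "epart (monom a N) = 0" by (rule poly_eqI) (use N in \<open>auto simp: coeff_epart coeff_monom\<close>)
  moreover have "opart (monom a N) = monom a N" by (rule poly_eqI) (use N in \<open>auto simp: coeff_opart coeff_monom\<close>)
  ultimately show ?thesis by (simp add: skew_S)
qed

lemma code_char:
  assumes X: "X = skew_mult th h g"
  shows "(\<exists>f k. c = skew_mult th f g + skew_mult th k X) \<longleftrightarrow> (\<exists>F. c = skew_mult th F g)"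
proof
  assume "\<exists>f k. c = skew_mult th f g + skew_mult th k X"
  then obtain f k where c: "c = skew_mult th f g + skew_mult th k X" by blast
  have "c = skew_mult th (f + skew_mult th k h) g"
    unfolding c X by (simp add: skew_add_left skew_assoc)
  then show "\<exists>F. c = skew_mult th F g" by blast
next
  assume "\<exists>F. c = skew_mult th F g"
  then obtain F where "c = skew_mult th F g" by blast
  then have "c = skew_mult th F g + skew_mult th 0 X" by simp
  then show "\<exists>f k. c = skew_mult th f g + skew_mult th k X" by blast
qed

lemma rev_dir:
  assumes pal: "palindromic g" and g0: "g \<noteq> 0" and n: "even n" and m: "even (degree g)"
    and F: "F \<noteq> 0" and deg: "degree (skew_mult th F g) < n"
  shows "TH (rv (n - 1) (skew_mult th F g)) = skew_mult th (TH (rv (n - 1 - degree g) F)) g"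
proof -
  define m where "m = degree g"
  define N1 where "N1 = n - 1 - m"
  have dF: "degree F + m < n" using deg degree_skew[OF F g0] m_def by simp
  have N1odd: "odd N1"
  proof -
    obtain a where a: "n = 2 * a" using n by (auto elim: evenE)
    obtain b where b: "m = 2 * b" using m m_def by (auto elim: evenE)
    have "N1 = 2 * (a - b - 1) + 1" using dF a b unfolding N1_def by presburger
    then show ?thesis by simp
  qed
  have nN: "n - 1 = N1 + m" unfolding N1_def using dF by simp
  have dE: "degree (epart F) \<le> N1" using degree_epart[of F] dF unfolding N1_def by simp
  have dO: "degree (opart F) \<le> N1" using degree_opart[of F] dF unfolding N1_def by simp
  have dg: "degree g \<le> m" by (simp add: m_def)
  have dTg: "degree (TH g) \<le> m" by (simp add: degree_TH m_def)
  have rg: "rv m g = g" using rv_pal[OF pal] m_def by simp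
  have rTg: "rv m (TH g) = TH g" by (simp add: rv_TH rg)
  have "TH (rv (n - 1) (skew_mult th F g)) = TH (rv (N1 + m) (epart F * g + opart F * TH g))"
    using nN by (simp add: skew_S)
  also have "\<dots> = TH (rv N1 (epart F) * rv m g + rv N1 (opart F) * rv m (TH g))"
    using rv_mult[OF dE dg] rv_mult[OF dO dTg] by (simp add: rv_add)
  also have "\<dots> = TH (rv N1 (opart F)) * g + TH (rv N1 (epart F)) * TH g"
    by (simp add: rg rTg TH_add TH_mult)
  also have "\<dots> = epart (TH (rv N1 F)) * g + opart (TH (rv N1 F)) * TH g"
    by (simp add: TH_epart[symmetric] TH_opart[symmetric] epart_rv[OF N1odd] opart_rv[OF N1odd])
  also have "\<dots> = skew_mult th (TH (rv N1 F)) g" by (simp add: skew_S)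
  finally show ?thesis unfolding N1_def m_def .
qed


lemma fwd_dir:
  assumes two: "(2::'a) = 0" and g0: "g \<noteq> 0" and gz: "coeff g 0 \<noteq> 0"
    and n: "even n" and m: "even (degree g)" and mn: "degree g < n"
    and F: "TH (rv (n - 1) g) = skew_mult th F g"
  shows "palindromic g"
proof -
  define m where "m = degree g"
  define N1 where "N1 = n - 1 - m"
  have N1odd: "odd N1"
  proof -
    obtain a where a: "n = 2 * a" using n by (auto elim: evenE)
    obtain b where b: "m = 2 * b" using m m_def by (auto elim: evenE)
    have "N1 = 2 * (a - b - 1) + 1" using mn a b unfolding N1_def m_def by presburger
    then show ?thesis by simp
  qed
  have nN: "n - 1 = N1 + m" unfolding N1_def m_def using mn by simp
  define r where "r = TH (rv (n - 1) g)"
  have cr: "coeff r t = th (if t \<le> n - 1 then coeff g (n - 1 - t) else 0)" for t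
    unfolding r_def by (simp add: coeff_TH coeff_rv)
  have lc: "coeff g m \<noteq> 0" using g0 m_def by simp
  have "coeff r N1 \<noteq> 0" using cr[of N1] lc nN by (simp add: N1_def)
  then have r0: "r \<noteq> 0" by auto
  then have F0: "F \<noteq> 0" using F r_def by auto
  have "coeff r (n - 1) \<noteq> 0" using cr[of "n - 1"] gz by simp
  then have "n - 1 \<le> degree r" by (rule le_degree)
  moreover have "degree r \<le> n - 1" unfolding r_def using degree_rv[of "n - 1" g] by (simp add: degree_TH)
  ultimately have "degree r = n - 1" by simp
  then have dF: "degree F = N1" using degree_skew[OF F0 g0] F nN r_def m_def by simp
  have low: "coeff F t = 0" if "t < N1" for t
    using that
  proof (induction t rule: less_induct)
    case (less t)
    have "coeff r t = 0" using cr[of t] less.prems unfolding N1_def m_def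
      by (simp add: coeff_eq_0)
    then have "0 = (\<Sum>i\<le>t. coeff F i * (if even i then coeff g (t - i) else th (coeff g (t - i))))"
      using F r_def coeff_skew by simp
    also have "\<dots> = (\<Sum>i<Suc t. coeff F i * (if even i then coeff g (t - i) else th (coeff g (t - i))))"
      by (simp only: lessThan_Suc_atMost)
    also have "\<dots> = coeff F t * (if even t then coeff g 0 else th (coeff g 0))"
      using less.IH less.prems by (simp add: sum.neutral)
    finally show ?case using gz by (auto split: if_splits)
  qed
  define a where "a = coeff F N1"
  have Fm: "F = monom a N1"
  proof (rule poly_eqI)
    fix i
    show "coeff F i = coeff (monom a N1) i"
    proof (cases "i < N1")
      case True then show ?thesis using low by (simp add: coeff_monom)
    next
      case False
      then show ?thesis using dF by (cases "i = N1") (auto simp: a_def coeff_monom coeff_eq_0)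
    qed
  qed
  have r1: "rv N1 (1::'a poly) = monom 1 N1"
    by (rule poly_eqI) (auto simp: coeff_rv coeff_monom)
  have "r = TH (rv (N1 + m) (1 * g))" unfolding r_def using nN by simp
  also have "\<dots> = TH (monom 1 N1 * rv m g)"
    using rv_mult[of 1 N1 g m] by (simp add: m_def r1)
  also have "\<dots> = monom 1 N1 * TH (rv m g)" by (simp add: TH_mult TH_monom)
  finally have e1: "r = monom 1 N1 * TH (rv m g)" .
  have "r = monom a N1 * TH g" using F r_def Fm skew_monom_odd[OF N1odd] by simp
  also have "\<dots> = monom 1 N1 * smult a (TH g)" using smult_monom_mult[of a 1 N1 "TH g"] by simp
  finally have "monom 1 N1 * TH (rv m g) = monom 1 N1 * smult a (TH g)" using e1 by simp
  moreover have nz: "monom (1::'a) N1 \<noteq> 0" by simp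
  ultimately have "TH (rv m g) = smult a (TH g)" using mult_left_cancel[OF nz] by blast
  then have "TH (TH (rv m g)) = TH (smult a (TH g))" by simp
  then have rvg: "rv m g = smult (th a) g" by (simp add: TH_smult)
  define b where "b = th a"
  have c0: "coeff g m = b * coeff g 0" using arg_cong[OF rvg, of "\<lambda>p. coeff p 0"]
    by (simp add: coeff_rv b_def)
  have cm: "coeff g 0 = b * coeff g m" using arg_cong[OF rvg, of "\<lambda>p. coeff p m"]
    by (simp add: coeff_rv b_def)
  have "coeff g 0 = (b * b) * coeff g 0" using c0 cm by simp
  then have bb: "b * b = 1" using gz by simp
  have "(b - 1) * (b - 1) = b * b - 2 * b + 1" by (simp add: algebra_simps)
  also have "\<dots> = 0" using bb two by simp
  finally have b1: "b = 1" by simp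
  then have rg: "rv m g = g" using rvg b_def by simp
  show ?thesis unfolding palindromic_def
  proof (intro allI impI)
    fix i assume "i \<le> degree g"
    then show "coeff g i = coeff g (degree g - i)"
      using arg_cong[OF rg, of "\<lambda>p. coeff p i"] by (simp add: coeff_rv m_def)
  qed
qed

lemma full_dir:
  assumes two: "(2::'a) = 0" and X: "xn_minus_1 n = skew_mult th h g" and dg: "degree g = n"
    and hz: "degree h = 0" and n: "n > 0"
  shows "palindromic g"
proof -
  have "epart h = h" by (rule poly_eqI) (use hz in \<open>auto simp: coeff_epart coeff_eq_0 odd_pos\<close>)
  moreover have "opart h = 0" by (rule poly_eqI) (use hz in \<open>auto simp: coeff_opart coeff_eq_0 odd_pos\<close>)
  ultimately have Xh: "xn_minus_1 n = h * g" using X by (simp add: skew_S)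
  have hc: "h = [:coeff h 0:]"
    by (rule poly_eqI) (use hz in \<open>auto simp: coeff_pCons split: nat.split intro!: coeff_eq_0\<close>)
  define c where "c = coeff h 0"
  have Xc: "coeff (xn_minus_1 n) i = c * coeff g i" for i
    using Xh hc c_def by (metis coeff_smult mult.right_neutral mult_pCons_left mult_zero_left
        smult_0_right add.right_neutral pCons_0_0 mult_poly_0_left)
  have cX: "coeff (xn_minus_1 n :: 'a poly) i = (if i = n then 1 else 0) - (if i = 0 then 1 else 0)" for i
    by (simp add: xn_minus_1_def coeff_monom)
  have m1: "(-1::'a) = 1" using two by (simp add: eq_neg_iff_add_eq_0)
  have "coeff (xn_minus_1 n :: 'a poly) n = 1" using cX[of n] n by simp
  then have c0: "c \<noteq> 0" using Xc[of n] by auto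
  show ?thesis unfolding palindromic_def dg
  proof (intro allI impI)
    fix i assume i: "i \<le> n"
    have "coeff (xn_minus_1 n :: 'a poly) i = coeff (xn_minus_1 n) (n - i)"
      unfolding cX using i n m1 by auto
    then show "coeff g i = coeff g (n - i)" using Xc c0 by simp
  qed
qed

end



lemma card_zero: "of_nat (card (UNIV::'a::{finite,ring_1} set)) = (0::'a)"
proof -
  have "(\<Sum>x\<in>UNIV. x + 1) = (\<Sum>x\<in>UNIV. (x::'a))"
    by (rule sum.reindex_bij_witness[of _ "\<lambda>x. x - 1" "\<lambda>x. x + 1"]) auto
  then have "(\<Sum>x\<in>UNIV. (x::'a)) + (\<Sum>x\<in>(UNIV::'a set). 1) = (\<Sum>x\<in>UNIV. x)"
    by (simp add: sum.distrib)
  then show ?thesis by simp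
qed

lemma pow_card: "(a::'a::{finite,field}) ^ card (UNIV::'a set) = a"
proof -
  have cpos: "card (UNIV::'a set) > 0" by (rule finite_UNIV_card_ge_0) simp
  show ?thesis
  proof (cases "a = 0")
    case True
    then show ?thesis using cpos by (simp add: zero_power)
  next
    case False
    define S where "S = UNIV - {0::'a}"
    have bij: "bij_betw (\<lambda>x. a * x) S S"
      by (rule bij_betw_byWitness[where f'="\<lambda>x. x / a"]) (use False in \<open>auto simp: S_def\<close>)
    have "(\<Prod>x\<in>S. a * x) = (\<Prod>x\<in>S. x)"
      using prod.reindex_bij_betw[OF bij, of "\<lambda>x. x"] by simp
    then have "a ^ card S * (\<Prod>x\<in>S. x) = 1 * (\<Prod>x\<in>S. x)"
      by (simp add: prod.distrib)
    moreover have "(\<Prod>x\<in>S. x) \<noteq> 0" by (simp add: S_def)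
    ultimately have 1: "a ^ card S = 1" using mult_right_cancel by blast
    have "card S = card (UNIV::'a set) - 1" unfolding S_def by (rule card_Diff_singleton) simp
    then have "card (UNIV::'a set) = Suc (card S)" using cpos by simp
    then show ?thesis using 1 by simp
  qed
qed
lemma two_zero:
  assumes "card (UNIV :: 'a::{finite,field} set) = 4 ^ (2 * s)" "s \<ge> 1"
  shows "(2::'a) = 0"
proof -
  have "(of_nat (4 ^ (2*s)) :: 'a) = 0" using card_zero[where 'a='a] assms by simp
  then have "(2::'a) ^ (4*s) = 0"
    by (simp add: power_mult flip: power_mult_distrib)
  then show ?thesis by simp
qed

lemma frob2:
  assumes "(2::'a::comm_ring_1) = 0"
  shows "((a::'a) + b) ^ (2 ^ k) = a ^ (2^k) + b ^ (2^k)"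
proof (induction k)
  case 0 then show ?case by simp
next
  case (Suc k)
  have sq: "(x + y)^2 = x^2 + y^2" for x y :: 'a
  proof -
    have "(x+y)^2 = x^2 + 2*x*y + y^2" by (simp add: power2_sum)
    then show ?thesis using assms by simp
  qed
  have "(a+b)^(2^Suc k) = ((a+b)^(2^k))^2" by (simp add: power_mult[symmetric] mult.commute)
  also have "\<dots> = (a^(2^k))^2 + (b^(2^k))^2" using Suc sq by simp
  also have "\<dots> = a ^ (2^Suc k) + b ^ (2^Suc k)" by (simp add: power_mult[symmetric] mult.commute)
  finally show ?case .
qed

lemma dna_inj:
  assumes len: "\<forall>x. length (\<tau> x) = k" and inj: "inj \<tau>"
  shows "length v = length w \<Longrightarrow> dna_map \<tau> v = dna_map \<tau> w \<Longrightarrow> v = w"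
proof (induction v arbitrary: w)
  case Nil then show ?case by simp
next
  case (Cons x v)
  then obtain y w' where w: "w = y # w'" by (cases w) auto
  have "\<tau> x @ dna_map \<tau> v = \<tau> y @ dna_map \<tau> w'"
    using Cons.prems w by (simp add: dna_map_def)
  moreover have "length (\<tau> x) = length (\<tau> y)" using len by simp
  ultimately have e1: "\<tau> x = \<tau> y" and e2: "dna_map \<tau> v = dna_map \<tau> w'"
    using append_eq_append_conv by blast+
  have "x = y" using inj e1 by (rule injD)
  moreover have "length v = length w'" using Cons.prems(1) w by simp
  then have "v = w'" using Cons.IH e2 by blast
  ultimately show ?case using w by simp
qed

theorem theorem1:
  fixes s n :: nat and \<theta> :: "'a::{finite,field} \<Rightarrow> 'a"
    and \<tau> :: "'a \<Rightarrow> nucleotide list" and g :: "'a poly"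
  assumes "s \<ge> 1"
    and "card (UNIV :: 'a set) = 4 ^ (2 * s)"
    and "\<theta> = (\<lambda>a. a ^ (4 ^ s))"
    and "bij_betw \<tau> UNIV {w. length w = 2 * s}"
    and "\<forall>\<beta>. \<tau> (\<beta> ^ (4 ^ s)) = rev (\<tau> \<beta>)"
    and "even n" and "n > 0"
    and "skew_right_dvd \<theta> g (xn_minus_1 n)"
    and "even (degree g)"
  shows "reversible_dna_code \<tau> (skew_cyclic_code \<theta> n g) \<longleftrightarrow> palindromic g"
proof -
  note th_def = assms(3)
  have two: "(2::'a) = 0" using two_zero assms(1,2) by blast
  have thadd: "\<theta> (a + b) = \<theta> a + \<theta> b" for a b
  proof -
    have "(4::nat) ^ s = 2 ^ (2 * s)" by (simp add: power_mult)
    then show ?thesis using frob2[OF two, of a b "2 * s"] th_def by simp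
  qed
  have thmult: "\<theta> (a * b) = \<theta> a * \<theta> b" for a b using th_def by (simp add: power_mult_distrib)
  have thinv: "\<theta> (\<theta> a) = a" for a
  proof -
    have "(4::nat) ^ s * 4 ^ s = 4 ^ (2 * s)" by (simp add: power_add[symmetric] mult_2)
    then have "\<theta> (\<theta> a) = a ^ card (UNIV :: 'a set)" using th_def assms(2) by (simp add: power_mult[symmetric])
    then show ?thesis by (simp add: pow_card)
  qed
  interpret I: invo \<theta> by unfold_locales (rule thadd thmult thinv)+
  obtain h where X: "xn_minus_1 n = skew_mult \<theta> h g"
    using assms(8) unfolding skew_right_dvd_def by blast
  have cX: "coeff (xn_minus_1 n :: 'a poly) i = (if i = n then 1 else 0) - (if i = 0 then 1 else 0)" for i
    by (simp add: xn_minus_1_def coeff_monom)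
  have Xn: "coeff (xn_minus_1 n :: 'a poly) n = 1" using cX[of n] assms(7) by simp
  have g0: "g \<noteq> 0"
  proof
    assume "g = 0"
    then have "xn_minus_1 n = (0::'a poly)" using X by (simp add: I.skew_S)
    then show False using Xn by simp
  qed
  have h0: "h \<noteq> 0"
  proof
    assume "h = 0"
    then have "xn_minus_1 n = (0::'a poly)" using X by simp
    then show False using Xn by simp
  qed
  have degX: "degree (xn_minus_1 n :: 'a poly) = n"
  proof (rule antisym)
    show "degree (xn_minus_1 n :: 'a poly) \<le> n" by (rule degree_le) (simp add: cX)
    show "n \<le> degree (xn_minus_1 n :: 'a poly)" using Xn by (intro le_degree) simp
  qed
  have dhg: "degree h + degree g = n" using I.degree_skew[OF h0 g0] X degX by simp
  have gz: "coeff g 0 \<noteq> 0"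
  proof
    assume z: "coeff g 0 = 0"
    have "coeff (xn_minus_1 n :: 'a poly) 0 = coeff (skew_mult \<theta> h g) 0" using X by simp
    also have "\<dots> = 0" using z by (simp add: I.coeff_skew)
    finally show False using cX[of 0] assms(7) by simp
  qed
  define P where "P = {c. degree c < n \<and> (\<exists>f k. c = skew_mult \<theta> f g + skew_mult \<theta> k (xn_minus_1 n))}"
  have Pc: "c \<in> P \<longleftrightarrow> degree c < n \<and> (\<exists>F. c = skew_mult \<theta> F g)" for c
    using I.code_char[OF X, of c] unfolding P_def by auto
  have code: "skew_cyclic_code \<theta> n g = vec_of n ` P" unfolding skew_cyclic_code_def P_def by simp
  define \<rho> where "\<rho> c = map_poly \<theta> (rv (n - 1) c)" for c
  have vecr: "vec_of n (\<rho> c) = map \<theta> (rev (vec_of n c))" for c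
    unfolding vec_of_def \<rho>_def
    by (rule nth_equalityI) (auto simp: rev_nth coeff_map_poly coeff_rv)
  have degr: "degree (\<rho> c) < n" for c
  proof -
    have "degree (\<rho> c) \<le> n - 1" unfolding \<rho>_def using degree_rv[of "n - 1" c] by (simp add: I.degree_TH)
    then show ?thesis using assms(7) by linarith
  qed
  have vinj: "c = d" if "degree c < n" "degree d < n" "vec_of n c = vec_of n d" for c d
  proof (rule poly_eqI)
    fix i
    show "coeff c i = coeff d i"
    proof (cases "i < n")
      case True
      then have "vec_of n c ! i = vec_of n d ! i" using that(3) by simp
      then show ?thesis using True by (simp add: vec_of_def)
    next
      case False
      then show ?thesis using that by (simp add: coeff_eq_0)
    qed
  qed
  have lenv: "length (vec_of n c) = n" for c by (simp add: vec_of_def)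
  have lent: "\<forall>x. length (\<tau> x) = 2 * s" using bij_betw_apply[OF assms(4)] by auto
  have injt: "inj \<tau>" using bij_betw_imp_inj_on[OF assms(4)] .
  have dna_rev: "rev (dna_map \<tau> v) = dna_map \<tau> (map \<theta> (rev v))" for v
  proof -
    have "\<tau> (\<theta> b) = rev (\<tau> b)" for b using assms(5) th_def by simp
    then show ?thesis unfolding dna_map_def by (simp add: rev_concat rev_map o_def)
  qed
  have revc: "reversible_dna_code \<tau> (vec_of n ` P) \<longleftrightarrow> (\<forall>c\<in>P. \<rho> c \<in> P)"
  proof
    assume R: "reversible_dna_code \<tau> (vec_of n ` P)"
    show "\<forall>c\<in>P. \<rho> c \<in> P"
    proof
      fix c assume c: "c \<in> P"
      from R c have "rev (dna_map \<tau> (vec_of n c)) \<in> dna_map \<tau> ` vec_of n ` P"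
        unfolding reversible_dna_code_def by blast
      then obtain u where u: "u \<in> vec_of n ` P" and eu: "rev (dna_map \<tau> (vec_of n c)) = dna_map \<tau> u"
        by (rule imageE)
      from u obtain d where d: "d \<in> P" and ud: "u = vec_of n d" by (rule imageE)
      have e: "dna_map \<tau> (vec_of n d) = rev (dna_map \<tau> (vec_of n c))" using eu ud by simp
      then have eq: "dna_map \<tau> (vec_of n d) = dna_map \<tau> (vec_of n (\<rho> c))" using dna_rev vecr by simp
      have v: "vec_of n d = vec_of n (\<rho> c)"
        by (rule dna_inj[OF lent injt _ eq]) (simp add: lenv)
      have dd: "degree d < n" using d Pc by simp
      have "d = \<rho> c" by (rule vinj[OF dd degr v])
      then show "\<rho> c \<in> P" using d by simp
    qed
  next
    assume H: "\<forall>c\<in>P. \<rho> c \<in> P"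
    show "reversible_dna_code \<tau> (vec_of n ` P)"
      unfolding reversible_dna_code_def
    proof
      fix v assume "v \<in> vec_of n ` P"
      then obtain c where c: "c \<in> P" "v = vec_of n c" by (rule imageE) simp
      have "rev (dna_map \<tau> v) = dna_map \<tau> (vec_of n (\<rho> c))" using c dna_rev vecr by simp
      moreover have "\<rho> c \<in> P" using H c(1) by (rule bspec)
      then have "vec_of n (\<rho> c) \<in> vec_of n ` P" by (rule imageI)
      then have "dna_map \<tau> (vec_of n (\<rho> c)) \<in> dna_map \<tau> ` vec_of n ` P" by (rule imageI)
      ultimately show "rev (dna_map \<tau> v) \<in> dna_map \<tau> ` vec_of n ` P" by simp
    qed
  qed
  show ?thesis unfolding code revc
  proof
    assume H: "\<forall>c\<in>P. \<rho> c \<in> P"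
    show "palindromic g"
    proof (cases "degree g = n")
      case True
      then have "degree h = 0" using dhg by simp
      then show ?thesis using I.full_dir[OF two X True _ assms(7)] by simp
    next
      case False
      then have mn: "degree g < n" using dhg by simp
      then have "g \<in> P" unfolding Pc using I.skew_1[of g] by metis
      then have "\<rho> g \<in> P" by (rule bspec[OF H])
      then have "\<exists>F. \<rho> g = skew_mult \<theta> F g" unfolding Pc by (rule conjunct2)
      then obtain F where F: "\<rho> g = skew_mult \<theta> F g" by (rule exE)
      show ?thesis by (rule I.fwd_dir[OF two g0 gz assms(6) assms(9) mn F[unfolded \<rho>_def]])
    qed
  next
    assume pal: "palindromic g"
    show "\<forall>c\<in>P. \<rho> c \<in> P"
    proof
      fix c assume "c \<in> P"
      then have dc: "degree c < n" and "\<exists>F. c = skew_mult \<theta> F g" unfolding Pc by simp_all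
      obtain F where c: "c = skew_mult \<theta> F g" using \<open>\<exists>F. c = skew_mult \<theta> F g\<close> by blast
      show "\<rho> c \<in> P"
      proof (cases "F = 0")
        case True
        then have "\<rho> c = skew_mult \<theta> 0 g" using c by (simp add: \<rho>_def)
        then show ?thesis unfolding Pc using degr[of c] by metis
      next
        case False
        have dc': "degree (skew_mult \<theta> F g) < n" using dc c by simp
        have "\<rho> c = skew_mult \<theta> (map_poly \<theta> (rv (n - 1 - degree g) F)) g"
          unfolding \<rho>_def c by (rule I.rev_dir[OF pal g0 assms(6) assms(9) False dc'])
        then show ?thesis unfolding Pc using degr[of c] by metis
      qed
    qed
  qed
qed

end
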